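(* Let $n\ge 1$ and let $\|\cdot\|_L$ be one of the vectorized norms $L_1,L_2,L_\infty$ on $\mathbb{R}^{n\times n}$. Let $M\subset\mathbb{R}^{n\times n}$ be a set containing an open ball $B(a,c)=\{x:\|x-a\|_L<c\}$ whose radius $c$ is large enough that $B(a,c)$ contains a singular matrix of rank $n-1$. Let $F:\mathbb{R}^{n\times n}\to\mathbb{R}^{n\times n}$ be any polynomial Lipschitz continuous function. Then for every $E>0$ there exists an invertible matrix $x\in M$ such that $$\|\mathrm{Inv}(x)-F(x)\|_L>E.$$
   Context: $\mathrm{Inv}(x)=x^{-1}$ denotes matrix inversion, defined on invertible matrices. For $A=(a_{ij})\in\mathbb{R}^{n\times n}$ the norms are vectorized: $\|A\|_{L_1}=\sum_{i,j}|a_{ij}|$, $\|A\|_{L_2}=(\sum_{i,j}|a_{ij}|^2)^{1/2}$, $\|A\|_{L_\infty}=\max_{i,j}|a_{ij}|$; $\mathbb{R}^{n\times n}$ is identified with $\mathbb{R}^{n^2}$. A function $f:\mathbb{R}^{n_1}\to\mathbb{R}^{n_2}$ is called polynomial Lipschitz continuous with respect to norms $\|\cdot\|_{L^+}$, $\|\cdot\|_{L^*}$ (chosen among $L_1,L_2,L_\infty$) if there exist a nonnegative integer $N$ and real polynomials $f_0,\dots,f_N$ in two variables such that for all $x,y$, $\|f(x)-f(y)\|_{L^*}\le \sum_{i=0}^{N} f_i(\|x\|_{L^+},\|y\|_{L^+})\|x-y\|_{L^+}^{i}$. *)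

theory Defs
  imports "HOL-Analysis.Analysis"
begin

datatype normkind = L1 | L2 | Linf

definition vnorm :: "normkind \<Rightarrow> real^'n::finite^'m::finite \<Rightarrow> real" where
  "vnorm k A = (case k of
      L1 \<Rightarrow> (\<Sum>i\<in>UNIV. \<Sum>j\<in>UNIV. \<bar>A $ i $ j\<bar>)
    | L2 \<Rightarrow> sqrt (\<Sum>i\<in>UNIV. \<Sum>j\<in>UNIV. \<bar>A $ i $ j\<bar>^2)
    | Linf \<Rightarrow> Max {\<bar>A $ i $ j\<bar> | i j. True})"

definition is_poly2 :: "(real \<Rightarrow> real \<Rightarrow> real) \<Rightarrow> bool" where
  "is_poly2 f \<longleftrightarrow> (\<exists>d::nat. \<exists>c::nat \<Rightarrow> nat \<Rightarrow> real.
      \<forall>s t. f s t = (\<Sum>i\<le>d. \<Sum>j\<le>d. c i j * s ^ i * t ^ j))"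

definition poly_lipschitz ::
  "normkind \<Rightarrow> normkind \<Rightarrow> (real^'n::finite^'n \<Rightarrow> real^'m::finite^'m) \<Rightarrow> bool" where
  "poly_lipschitz kp ks f \<longleftrightarrow> (\<exists>N::nat. \<exists>fs::nat \<Rightarrow> real \<Rightarrow> real \<Rightarrow> real.
      (\<forall>i\<le>N. is_poly2 (fs i)) \<and>
      (\<forall>x y. vnorm ks (f x - f y) \<le>
         (\<Sum>i\<le>N. fs i (vnorm kp x) (vnorm kp y) * vnorm kp (x - y) ^ i)))"

end

theory Submission
  imports Defs
begin


definition L1n :: "real^'n::finite^'m::finite \<Rightarrow> real" where
  "L1n A = (\<Sum>i\<in>UNIV. \<Sum>j\<in>UNIV. \<bar>A $ i $ j\<bar>)"

lemma Linf_set: "{\<bar>A $ i $ j\<bar> | i j. True} = (\<lambda>(i,j). \<bar>A $ i $ j\<bar>) ` UNIV"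
  by auto

lemma L1_ge_entry: "\<bar>A $ i $ j\<bar> \<le> L1n (A::real^'n::finite^'m::finite)"
proof -
  have "\<bar>A $ i $ j\<bar> \<le> (\<Sum>j\<in>UNIV. \<bar>A $ i $ j\<bar>)"
    by (rule member_le_sum) auto
  also have "\<dots> \<le> L1n A" unfolding L1n_def
    by (rule member_le_sum[where f="\<lambda>i. \<Sum>j\<in>UNIV. \<bar>A $ i $ j\<bar>"]) (auto intro: sum_nonneg)
  finally show ?thesis .
qed

lemma vnorm_L2: "vnorm L2 A = norm A"
  unfolding vnorm_def norm_vec_def L2_set_def
  by (simp add: real_sqrt_pow2 sum_nonneg power2_abs)

lemma vnorm_ge_entry: "\<bar>A $ i $ j\<bar> \<le> vnorm k (A::real^'n::finite^'m::finite)"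
proof (cases k)
  case L1 then show ?thesis using L1_ge_entry[of A i j] by (simp add: vnorm_def L1n_def)
next
  case L2
  have "\<bar>A $ i $ j\<bar> \<le> norm (A $ i)" by (metis component_le_norm_cart real_norm_def)
  also have "\<dots> \<le> norm A" by (rule Finite_Cartesian_Product.norm_nth_le)
  finally show ?thesis using L2 vnorm_L2[of A] by simp
next
  case Linf then show ?thesis unfolding vnorm_def Linf_set
    by simp (rule Max_ge, auto)
qed

lemma vnorm_nonneg: "0 \<le> vnorm k A"
  using vnorm_ge_entry[of A undefined undefined k] by linarith

lemma vnorm_le_L1: "vnorm k (A::real^'n::finite^'m::finite) \<le> L1n A"
proof (cases k)
  case L1 then show ?thesis by (simp add: vnorm_def L1n_def)
next
  case L2
  have "norm A \<le> (\<Sum>i\<in>UNIV. norm (A $ i))"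
    unfolding norm_vec_def by (rule L2_set_le_sum) auto
  also have "\<dots> \<le> L1n A" unfolding L1n_def
  proof (rule sum_mono)
    fix i show "norm (A $ i) \<le> (\<Sum>j\<in>UNIV. \<bar>A $ i $ j\<bar>)"
      unfolding norm_vec_def by (rule order_trans[OF L2_set_le_sum]) auto
  qed
  finally show ?thesis using L2 vnorm_L2[of A] by simp
next
  case Linf then show ?thesis unfolding vnorm_def Linf_set
    using L1_ge_entry[of A] by (auto simp: Max_le_iff)
qed

lemma L1_le_vnorm: "L1n (A::real^'n::finite^'m::finite) \<le> real (CARD('m) * CARD('n)) * vnorm k A"
proof -
  have "L1n A \<le> (\<Sum>i\<in>(UNIV::'m set). \<Sum>j\<in>(UNIV::'n set). vnorm k A)"
    unfolding L1n_def by (intro sum_mono vnorm_ge_entry)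
  then show ?thesis by simp
qed

lemma vnorm_triangle: "vnorm k (A + B) \<le> vnorm k A + vnorm k (B::real^'n::finite^'m::finite)"
proof (cases k)
  case L1 then show ?thesis
    by (simp add: vnorm_def sum.distrib[symmetric] sum_mono abs_triangle_ineq)
next
  case L2 then show ?thesis using norm_triangle_ineq[of A B] by (simp add: vnorm_L2)
next
  case Linf
  have "\<bar>(A+B) $ i $ j\<bar> \<le> vnorm k A + vnorm k B" for i j
    using vnorm_ge_entry[of A i j k] vnorm_ge_entry[of B i j k] by (simp add: abs_triangle_ineq order_trans)
  then show ?thesis using Linf unfolding vnorm_def Linf_set by (auto simp: Max_le_iff)
qed

lemma L1n_scale: "L1n (t *\<^sub>R A) = \<bar>t\<bar> * L1n A"
  by (simp add: L1n_def abs_mult sum_distrib_left)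

lemma poly2_bound:
  assumes "is_poly2 f"
  shows "\<exists>K. \<forall>s u. \<bar>s\<bar> \<le> R \<longrightarrow> \<bar>u\<bar> \<le> R \<longrightarrow> \<bar>f s u\<bar> \<le> K"
proof -
  obtain d c where f: "\<And>s t. f s t = (\<Sum>i\<le>d. \<Sum>j\<le>d. c i j * s ^ i * t ^ j)"
    using assms unfolding is_poly2_def by blast
  have "\<bar>f s u\<bar> \<le> (\<Sum>i\<le>d. \<Sum>j\<le>d. \<bar>c i j\<bar> * R ^ i * R ^ j)" if "\<bar>s\<bar> \<le> R" "\<bar>u\<bar> \<le> R" for s u
  proof -
    have "\<bar>f s u\<bar> \<le> (\<Sum>i\<le>d. \<bar>\<Sum>j\<le>d. c i j * s ^ i * u ^ j\<bar>)" unfolding f by (rule sum_abs)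
    also have "\<dots> \<le> (\<Sum>i\<le>d. \<Sum>j\<le>d. \<bar>c i j * s ^ i * u ^ j\<bar>)" by (intro sum_mono sum_abs)
    also have "\<dots> \<le> (\<Sum>i\<le>d. \<Sum>j\<le>d. \<bar>c i j\<bar> * R ^ i * R ^ j)"
    proof (intro sum_mono)
      fix i j
      have "\<bar>s\<bar> ^ i \<le> R ^ i" "\<bar>u\<bar> ^ j \<le> R ^ j" using that by (auto intro: power_mono)
      then show "\<bar>c i j * s ^ i * u ^ j\<bar> \<le> \<bar>c i j\<bar> * R ^ i * R ^ j"
      proof -
        have "\<bar>c i j\<bar> * \<bar>s\<bar> ^ i * \<bar>u\<bar> ^ j \<le> \<bar>c i j\<bar> * R ^ i * R ^ j"
          using that by (intro mult_mono mult_left_mono power_mono) auto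
        then show ?thesis by (simp add: abs_mult power_abs)
      qed
    qed
    finally show ?thesis .
  qed
  then show ?thesis by blast
qed

lemma poly2_bound_all:
  fixes N :: nat
  assumes "\<forall>i\<le>N. is_poly2 (fs i)"
  shows "\<exists>K. \<forall>i\<le>N. \<forall>s u. \<bar>s\<bar> \<le> R \<longrightarrow> \<bar>u\<bar> \<le> R \<longrightarrow> \<bar>fs i s u\<bar> \<le> K"
  using assms
proof (induction N)
  case 0 then show ?case using poly2_bound[of "fs 0" R] by auto
next
  case (Suc N)
  then obtain K where K: "\<forall>i\<le>N. \<forall>s u. \<bar>s\<bar> \<le> R \<longrightarrow> \<bar>u\<bar> \<le> R \<longrightarrow> \<bar>fs i s u\<bar> \<le> K" by auto
  obtain K' where K': "\<forall>s u. \<bar>s\<bar> \<le> R \<longrightarrow> \<bar>u\<bar> \<le> R \<longrightarrow> \<bar>fs (Suc N) s u\<bar> \<le> K'"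
    using poly2_bound[of "fs (Suc N)" R] Suc.prems by auto
  show ?case
    by (rule exI[of _ "max K K'"]) (metis K K' le_Suc_eq max.coboundedI1 max.coboundedI2)
qed



lemma null_span1:
  fixes y :: "real^'n::finite^'n"
  assumes rk: "rank y = CARD('n) - 1" and v: "y *v v = 0" "v \<noteq> 0" and z: "y *v z = 0"
  shows "z \<in> span {v}"
proof (rule ccontr)
  assume nz: "z \<notin> span {v}"
  have c0: "0 < CARD('n)" by simp
  define K where "K = {z. y *v z = 0}"
  have K_eq: "K = {z \<in> UNIV. \<forall>x\<in>span (rows y). orthogonal x z}"
  proof (intro set_eqI iffI)
    fix u assume "u \<in> K"
    then show "u \<in> {z \<in> UNIV. \<forall>x\<in>span (rows y). orthogonal x z}"
      using orthogonal_nullspace_rowspace[of y u] by (auto simp: K_def orthogonal_commute)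
  next
    fix u assume u: "u \<in> {z \<in> UNIV. \<forall>x\<in>span (rows y). orthogonal x z}"
    have "(y *v u) $ i = 0" for i
    proof -
      have "row i y \<in> span (rows y)" by (auto simp: rows_def intro: span_base)
      then have "orthogonal (row i y) u" using u by auto
      then show ?thesis by (simp add: matrix_vector_mul_component orthogonal_def row_def vec_lambda_eta)
    qed
    then show "u \<in> K" by (simp add: K_def vec_eq_iff)
  qed
  have "dim K + dim (span (rows y)) = dim (UNIV :: (real^'n) set)"
    unfolding K_eq by (rule dim_subspace_orthogonal_to_vectors) auto
  then have dK: "dim K = 1"
    using rk by (simp add: row_rank_def) (use c0 in linarith)
  have ind: "independent {z, v}"
    using nz v(2) by (auto simp: independent_insert span_base)
  have "card {z, v} \<le> dim K"
    by (rule independent_card_le_dim) (use ind v z in \<open>auto simp: K_def\<close>)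
  moreover have "z \<noteq> v" using nz by (auto intro: span_base)
  ultimately show False using dK by simp
qed

lemma not_surj:
  fixes y :: "real^'n::finite^'n"
  assumes rk: "rank y = CARD('n) - 1"
  shows "\<exists>w. w \<notin> range ((*v) y)"
proof (rule ccontr)
  have c0: "0 < CARD('n)" by simp
  assume "\<not> ?thesis"
  then have "surj ((*v) y)" by auto
  then have "rank y = CARD('n)" by (simp add: full_rank_surjective)
  then show False using rk c0 by linarith
qed



lemma entry_bound:
  fixes A :: "real^'n::finite^'n"
  shows "\<bar>(A *v w) $ i\<bar> \<le> vnorm k A * (\<Sum>j\<in>UNIV. \<bar>w $ j\<bar>)"
proof -
  have "\<bar>(A *v w) $ i\<bar> = \<bar>\<Sum>j\<in>UNIV. A $ i $ j * w $ j\<bar>"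
    by (simp add: matrix_vector_mult_def)
  also have "\<dots> \<le> (\<Sum>j\<in>UNIV. \<bar>A $ i $ j\<bar> * \<bar>w $ j\<bar>)"
    by (rule order_trans[OF sum_abs]) (simp add: abs_mult)
  also have "\<dots> \<le> (\<Sum>j\<in>UNIV. vnorm k A * \<bar>w $ j\<bar>)"
    by (intro sum_mono mult_right_mono vnorm_ge_entry) auto
  finally show ?thesis by (simp add: sum_distrib_left)
qed

lemma minv_left:
  fixes A :: "real^'n::finite^'n"
  assumes "invertible A" shows "matrix_inv A ** A = mat 1"
  using assms unfolding invertible_def matrix_inv_def by (rule someI2_ex) auto

lemma vnorm_diff_ge: "vnorm k A - vnorm k B \<le> vnorm k (A - B)"
  using vnorm_triangle[of k "A - B" B] by simp

lemma vnorm_le_card: "vnorm k A \<le> real (CARD('n) * CARD('n)) * vnorm k' (A::real^'n::finite^'n)"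
  using vnorm_le_L1[of k A] L1_le_vnorm[of A k'] by linarith

theorem theorem3p7:
  fixes M :: "(real^'n::finite^'n) set"
    and a :: "real^'n^'n" and c :: real
    and F :: "real^'n^'n \<Rightarrow> real^'n^'n"
    and L Lp Ls :: normkind
  assumes ball_sub: "{x. vnorm L (x - a) < c} \<subseteq> M"
    and rank_in_ball: "\<exists>y. vnorm L (y - a) < c \<and> \<not> invertible y \<and> rank y = CARD('n) - 1"
    and F_pl: "poly_lipschitz Lp Ls F"
  shows "\<forall>E>0. \<exists>x\<in>M. invertible x \<and> vnorm L (matrix_inv x - F x) > E"
proof (intro allI impI)
  fix E :: real assume E: "E > 0"
  obtain y where y: "vnorm L (y - a) < c" "\<not> invertible y" and rk: "rank y = CARD('n) - 1"
    using rank_in_ball by blast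
  have c0: "0 < CARD('n)" by simp
  have "rank y \<noteq> CARD('n)" using rk c0 by linarith
  then obtain v where v: "v \<noteq> 0" "y *v v = 0"
    using matrix_nonfull_linear_equations_eq[of y] by blast
  obtain w where w: "w \<notin> range ((*v) y)" using not_surj[OF rk] by blast
  have w0: "w \<noteq> 0" using w by (metis matrix_vector_mult_0_right rangeI)
  define W where "W = (\<Sum>j\<in>UNIV. \<bar>w $ j\<bar>)"
  have W0: "W > 0"
  proof -
    obtain j where "w $ j \<noteq> 0" using w0 by (auto simp: vec_eq_iff)
    then have "0 < \<bar>w $ j\<bar>" by simp
    also have "\<dots> \<le> W" unfolding W_def by (rule member_le_sum) auto
    finally show ?thesis .
  qed
  obtain i0 where i0: "v $ i0 \<noteq> 0" using v(1) by (auto simp: vec_eq_iff)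
  define vv where "vv = v \<bullet> v"
  have vv0: "vv > 0" using v(1) by (simp add: vv_def)
  define B :: "real^'n^'n" where "B = (\<chi> i j. w $ i * v $ j)"
  have Bz: "B *v z = (v \<bullet> z) *\<^sub>R w" for z
    unfolding B_def vec_eq_iff matrix_vector_mult_def inner_vec_def
    by (simp add: sum_distrib_left sum_distrib_right mult_ac)
  define X where "X t = y + t *\<^sub>R B" for t :: real
  have Xz: "X t *v z = y *v z + (t * (v \<bullet> z)) *\<^sub>R w" for t z
    by (simp add: X_def matrix_vector_mult_add_rdistrib Bz scaleR_matrix_vector_assoc[symmetric])
  have Xinv: "invertible (X t)" if t: "t \<noteq> 0" for t
  proof -
    have "z = 0" if z: "X t *v z = 0" for z
    proof -
      have vz: "v \<bullet> z = 0"
      proof (rule ccontr)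
        assume nz: "v \<bullet> z \<noteq> 0"
        have "y *v ((- 1 / (t * (v \<bullet> z))) *\<^sub>R z) = (- 1 / (t * (v \<bullet> z))) *\<^sub>R (y *v z)"
          by (rule matrix_vector_mult_scaleR)
        also have "y *v z = - ((t * (v \<bullet> z)) *\<^sub>R w)" using z Xz[of t z] by (simp add: add_eq_0_iff)
        also have "(- 1 / (t * (v \<bullet> z))) *\<^sub>R - ((t * (v \<bullet> z)) *\<^sub>R w) = w"
          using nz t by simp
        finally show False using w by (metis rangeI)
      qed
      then have "y *v z = 0" using z Xz[of t z] by simp
      then have "z \<in> span {v}" using null_span1[OF rk v(2) v(1)] by blast
      then obtain s where s: "z = s *\<^sub>R v" by (auto simp: span_singleton)
      then have "s * vv = 0" using vz by (simp add: vv_def)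
      then show "z = 0" using vv0 s by simp
    qed
    then have "rank (X t) = CARD('n)"
      using matrix_nonfull_linear_equations_eq[of "X t"] by blast
    then show ?thesis
      using det_eq_0_rank[of "X t"] invertible_det_nz[of "X t"] by simp
  qed
  have Xv: "X t *v v = (t * vv) *\<^sub>R w" for t
    using Xz[of t v] v(2) by (simp add: vv_def)
  have invw: "matrix_inv (X t) *v w = (1 / (t * vv)) *\<^sub>R v" if t: "t \<noteq> 0" for t
  proof -
    have "matrix_inv (X t) *v (X t *v v) = v"
      using minv_left[OF Xinv[OF t]] by (simp add: matrix_vector_mul_assoc)
    then have "(t * vv) *\<^sub>R (matrix_inv (X t) *v w) = v"
      by (simp add: Xv matrix_vector_mult_scaleR)
    then show ?thesis using t vv0 by (auto simp: field_simps)
  qed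
  have invlow: "\<bar>v $ i0\<bar> / (t * vv * W) \<le> vnorm L (matrix_inv (X t))" if t: "t > 0" for t
  proof -
    have "\<bar>v $ i0\<bar> / (t * vv) = \<bar>(matrix_inv (X t) *v w) $ i0\<bar>"
      using t vv0 by (simp add: invw abs_mult)
    also have "\<dots> \<le> vnorm L (matrix_inv (X t)) * W"
      unfolding W_def by (rule entry_bound)
    finally show ?thesis using t vv0 W0 by (simp add: field_simps)
  qed
  define D where "D = L1n B"
  have D0: "D \<ge> 0" unfolding D_def L1n_def by (simp add: sum_nonneg)
  have XB: "vnorm k (X t - y) \<le> t * D" if "0 \<le> t" for t k
    using vnorm_le_L1[of k "t *\<^sub>R B"] that by (simp add: X_def D_def L1n_scale)
  obtain N fs where fsP: "\<forall>i\<le>N. is_poly2 (fs i)"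
    and fsL: "\<forall>x y. vnorm Ls (F x - F y) \<le> (\<Sum>i\<le>N. fs i (vnorm Lp x) (vnorm Lp y) * vnorm Lp (x - y) ^ i)"
    using F_pl unfolding poly_lipschitz_def by blast
  define R where "R = vnorm Lp y + D"
  obtain K where K: "\<forall>i\<le>N. \<forall>s u. \<bar>s\<bar> \<le> R \<longrightarrow> \<bar>u\<bar> \<le> R \<longrightarrow> \<bar>fs i s u\<bar> \<le> K"
    using poly2_bound_all[OF fsP] by blast
  define G where "G = real (CARD('n) * CARD('n)) * (vnorm Ls (F y) + (\<Sum>i\<le>N. K * D ^ i))"
  have Fb: "vnorm L (F (X t)) \<le> G" if t: "0 < t" "t \<le> 1" for t
  proof -
    have d1: "vnorm Lp (X t - y) \<le> D" using XB[of t Lp] t D0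
      by (meson less_imp_le mult_left_le_one_le order_trans)
    have d0: "0 \<le> vnorm Lp (X t - y)" by (rule vnorm_nonneg)
    have r1: "\<bar>vnorm Lp (X t)\<bar> \<le> R"
      using vnorm_triangle[of Lp "X t - y" y] d1 vnorm_nonneg[of Lp "X t"] by (simp add: R_def)
    have r2: "\<bar>vnorm Lp y\<bar> \<le> R" using D0 vnorm_nonneg[of Lp y] by (simp add: R_def)
    have "vnorm Ls (F (X t) - F y) \<le> (\<Sum>i\<le>N. fs i (vnorm Lp (X t)) (vnorm Lp y) * vnorm Lp (X t - y) ^ i)"
      using fsL by blast
    also have "\<dots> \<le> (\<Sum>i\<le>N. K * D ^ i)"
    proof (rule sum_mono)
      fix i assume i: "i \<in> {..N}"
      have Ki: "\<bar>fs i (vnorm Lp (X t)) (vnorm Lp y)\<bar> \<le> K" using K i r1 r2 by auto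
      have p: "vnorm Lp (X t - y) ^ i \<le> D ^ i" using d1 d0 by (rule power_mono)
      have "fs i (vnorm Lp (X t)) (vnorm Lp y) * vnorm Lp (X t - y) ^ i
          \<le> \<bar>fs i (vnorm Lp (X t)) (vnorm Lp y)\<bar> * vnorm Lp (X t - y) ^ i"
        using d0 by (intro mult_right_mono) auto
      also have "\<dots> \<le> K * D ^ i"
        using Ki p d0 by (intro mult_mono) auto
      finally show "fs i (vnorm Lp (X t)) (vnorm Lp y) * vnorm Lp (X t - y) ^ i \<le> K * D ^ i" .
    qed
    finally have "vnorm Ls (F (X t)) \<le> vnorm Ls (F y) + (\<Sum>i\<le>N. K * D ^ i)"
      using vnorm_triangle[of Ls "F (X t) - F y" "F y"] by simp
    then show ?thesis
      using vnorm_le_card[of L "F (X t)" Ls] unfolding G_def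
      by (smt (verit) mult_left_mono of_nat_0_le_iff)
  qed
  define \<delta> where "\<delta> = c - vnorm L (y - a)"
  have \<delta>0: "\<delta> > 0" using y(1) by (simp add: \<delta>_def)
  define t where "t = min 1 (min (\<delta> / (2 * (D + 1))) (\<bar>v $ i0\<bar> / (vv * W * (E + \<bar>G\<bar> + 1))))"
  have Q0: "vv * W * (E + \<bar>G\<bar> + 1) > 0" using vv0 W0 E by simp
  have t0: "t > 0" using \<delta>0 D0 Q0 i0 by (simp add: t_def)
  have t1: "t \<le> 1" by (simp add: t_def)
  have tD: "t * D < \<delta>"
  proof -
    have "t \<le> \<delta> / (2 * (D + 1))" by (simp add: t_def)
    then have "t * (2 * (D + 1)) \<le> \<delta>" using D0 by (simp add: field_simps)
    moreover have "t * D < t * (2 * (D + 1))" using t0 D0 by (intro mult_strict_left_mono) auto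
    ultimately show ?thesis by linarith
  qed
  have tv: "t * (vv * W * (E + \<bar>G\<bar> + 1)) \<le> \<bar>v $ i0\<bar>"
  proof -
    have "t \<le> \<bar>v $ i0\<bar> / (vv * W * (E + \<bar>G\<bar> + 1))" by (simp add: t_def)
    then show ?thesis using Q0 by (simp add: field_simps)
  qed
  show "\<exists>x\<in>M. invertible x \<and> vnorm L (matrix_inv x - F x) > E"
  proof (intro bexI conjI)
    show "invertible (X t)" using Xinv t0 by simp
    have "vnorm L (X t - a) \<le> vnorm L (X t - y) + vnorm L (y - a)"
      using vnorm_triangle[of L "X t - y" "y - a"] by simp
    also have "\<dots> < c" using XB[of t L] t0 tD by (simp add: \<delta>_def)
    finally show "X t \<in> M" using ball_sub by blast
    have "E + \<bar>G\<bar> + 1 \<le> \<bar>v $ i0\<bar> / (t * vv * W)"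
      using tv t0 vv0 W0 by (simp add: field_simps)
    also have "\<dots> \<le> vnorm L (matrix_inv (X t))" by (rule invlow[OF t0])
    finally have "E + \<bar>G\<bar> + 1 \<le> vnorm L (matrix_inv (X t))" .
    moreover have "vnorm L (matrix_inv (X t)) - vnorm L (F (X t)) \<le> vnorm L (matrix_inv (X t) - F (X t))"
      by (rule vnorm_diff_ge)
    moreover have "vnorm L (F (X t)) \<le> G" using Fb t0 t1 by blast
    ultimately show "vnorm L (matrix_inv (X t) - F (X t)) > E" by linarith
  qed
qed

end
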